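(* Let $k$ be an algebraically closed field, let $\lambda=(\lambda_1\ge\lambda_2\ge\dots)$ be a partition of $n$ (with $\lambda_j=0$ for $j$ beyond its length), and let $X\in\mathfrak{gl}_n(k)$ be a nilpotent matrix whose Jordan block sizes are given by $\lambda$. Let $1\le i\le n-1$. (i) Every $i$-dimensional subspace $W$ of $V=k^n$ contains an $X$-invariant subspace $U$ with $\dim U\ge\sum_{j>n-i}\lambda_j$. (ii) The upper-left $i\times i$ submatrix $X_{\le i,\le i}$ of $X$ has stable rank at most $d_{\lambda,i}:=i-\sum_{j>n-i}\lambda_j$. *)

theory Defs
  imports "Jordan_Normal_Form.Jordan_Normal_Form" "Jordan_Normal_Form.DL_Rank_Submatrix"
    "HOL-Computational_Algebra.Polynomial"
begin

definition is_subspace :: "nat \<Rightarrow> 'a::field vec set \<Rightarrow> bool" where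
  "is_subspace n W \<longleftrightarrow> subspace class_ring W (module_vec TYPE('a) n)"

definition sub_dim :: "nat \<Rightarrow> 'a::field vec set \<Rightarrow> nat" where
  "sub_dim n W = vectorspace.dim class_ring ((module_vec TYPE('a) n)\<lparr>carrier := W\<rparr>)"

definition mat_rank :: "'a::field mat \<Rightarrow> nat" where
  "mat_rank A = vec_space.rank (dim_row A) A"

definition stable_rank :: "'a::field mat \<Rightarrow> nat" where
  "stable_rank A = (THE r. \<exists>N. \<forall>m\<ge>N. mat_rank (A ^\<^sub>m m) = r)"

(* a partition of n, given by its nonzero parts in weakly decreasing order;
   lambda_j = ls ! (j-1) for 1 <= j <= length ls, and 0 beyond *)
definition is_partition :: "nat list \<Rightarrow> nat \<Rightarrow> bool" where
  "is_partition ls n \<longleftrightarrow> sorted_wrt (\<ge>) ls \<and> 0 \<notin> set ls \<and> sum_list ls = n"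

end

theory Submission
  imports Defs "Jordan_Normal_Form.Jordan_Normal_Form_Uniqueness"
begin

lemma is_subspaceI:
  fixes W :: "'a::field vec set"
  assumes "W \<subseteq> carrier_vec n" "0\<^sub>v n \<in> W" "\<And>x y. x \<in> W \<Longrightarrow> y \<in> W \<Longrightarrow> x + y \<in> W"
    "\<And>c x. x \<in> W \<Longrightarrow> c \<cdot>\<^sub>v x \<in> W"
  shows "is_subspace n W"
proof -
  interpret vec_space "TYPE('a)" n .
  show ?thesis unfolding is_subspace_def subspace_def submodule_def
    using assms vectorspace_axioms vec_module[where ?'a='a and n=n] by auto
qed

lemma is_subspaceD:
  fixes W :: "'a::field vec set"
  assumes "is_subspace n W"
  shows "W \<subseteq> carrier_vec n" "0\<^sub>v n \<in> W" "\<And>x y. x \<in> W \<Longrightarrow> y \<in> W \<Longrightarrow> x + y \<in> W"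
    "\<And>c x. x \<in> W \<Longrightarrow> c \<cdot>\<^sub>v x \<in> W"
proof -
  interpret vec_space "TYPE('a)" n .
  from assms have "submodule class_ring W V" unfolding is_subspace_def subspace_def by auto
  then show "W \<subseteq> carrier_vec n" "0\<^sub>v n \<in> W" "\<And>x y. x \<in> W \<Longrightarrow> y \<in> W \<Longrightarrow> x + y \<in> W"
    "\<And>c x. x \<in> W \<Longrightarrow> c \<cdot>\<^sub>v x \<in> W" unfolding submodule_def by auto
qed

lemma subspace_fin_dim:
  fixes W :: "'a::field vec set"
  assumes "is_subspace n W"
  shows "vectorspace.fin_dim class_ring (module_vec TYPE('a) n\<lparr>carrier := W\<rparr>)"
    and "sub_dim n W \<le> n"
proof -
  interpret vec_space "TYPE('a)" n .
  have sW: "subspace class_ring W V" using assms unfolding is_subspace_def by auto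
  interpret W: vectorspace class_ring "vs W" using subspace_is_vs[OF sW] .
  have subm: "submodule class_ring W V" using sW unfolding subspace_def by auto
  have bound: "finite S \<and> card S \<le> n" if "S \<subseteq> carrier (vs W) \<and> W.lin_indpt S" for S
  proof -
    have SW: "S \<subseteq> W" using that by auto
    have "lin_indpt S" using that span_li_not_depend(2)[OF SW subm] by auto
    moreover have "S \<subseteq> carrier V" using SW sW unfolding subspace_def submodule_def by auto
    ultimately show ?thesis using li_le_dim[OF fin_dim] dim_is_n by auto
  qed
  have "W.lin_indpt {}" unfolding W.lin_dep_def by auto
  hence "\<exists>A. finite A \<and> maximal A (\<lambda>S. S \<subseteq> carrier (vs W) \<and> W.lin_indpt S)"
    by (intro maximal_exists[where N=n and B="{}"]) (use bound in auto)
  then obtain A where A: "finite A" "maximal A (\<lambda>S. S \<subseteq> carrier (vs W) \<and> W.lin_indpt S)" by auto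
  have "W.gen_set A" by (rule W.max_li_is_gen[OF A(2)])
  moreover have "A \<subseteq> carrier (vs W)" using A(2) unfolding maximal_def by auto
  ultimately show fd: "W.fin_dim" unfolding W.fin_dim_def using A(1) by auto
  have "W.basis A" by (rule W.max_li_is_basis[OF A(2)])
  hence "W.dim = card A" using W.dim_basis A(1) by auto
  also have "\<dots> \<le> n" using bound A(2) unfolding maximal_def by auto
  finally show "sub_dim n W \<le> n" unfolding sub_dim_def .
qed

lemma sub_dim_mono:
  fixes A B :: "'a::field vec set"
  assumes A: "is_subspace n A" and B: "is_subspace n B" and AB: "A \<subseteq> B"
  shows "sub_dim n A \<le> sub_dim n B"
proof -
  interpret vec_space "TYPE('a)" n .
  have sA: "subspace class_ring A V" and sB: "subspace class_ring B V"
    using A B unfolding is_subspace_def by auto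
  interpret B: vectorspace class_ring "vs B" using subspace_is_vs[OF sB] .
  have "subspace class_ring A (vs B)" by (rule nested_subspaces[OF sB sA AB])
  from B.subspace_dim[OF this] subspace_fin_dim[OF A] subspace_fin_dim[OF B]
  show ?thesis unfolding sub_dim_def by simp
qed

lemma sub_dim_full: "sub_dim n (carrier_vec n :: 'a::field vec set) = n"
proof -
  interpret vec_space "TYPE('a)" n .
  have e: "vs (carrier_vec n) = V" by (simp add: module_vec_def)
  show ?thesis unfolding sub_dim_def e by (rule dim_is_n)
qed

lemma is_subspace_full: "is_subspace n (carrier_vec n :: 'a::field vec set)"
  by (rule is_subspaceI) auto

lemma sub_dim_rank_nullity:
  fixes Y :: "'a::field mat" and A :: "'a vec set"
  assumes Y: "Y \<in> carrier_mat m n" and A: "is_subspace n A"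
  shows "is_subspace m ((\<lambda>v. Y *\<^sub>v v) ` A)"
    "is_subspace n {v \<in> A. Y *\<^sub>v v = 0\<^sub>v m}"
    "sub_dim n A = sub_dim m ((\<lambda>v. Y *\<^sub>v v) ` A) + sub_dim n {v \<in> A. Y *\<^sub>v v = 0\<^sub>v m}"
proof -
  note AD = is_subspaceD[OF A]
  have AC: "\<And>x. x \<in> A \<Longrightarrow> x \<in> carrier_vec n" using AD(1) by auto
  show "is_subspace m ((\<lambda>v. Y *\<^sub>v v) ` A)"
  proof (rule is_subspaceI)
    show "(\<lambda>v. Y *\<^sub>v v) ` A \<subseteq> carrier_vec m" using Y AD(1) by auto
    show "0\<^sub>v m \<in> (\<lambda>v. Y *\<^sub>v v) ` A"
      using AD(2) Y by (intro image_eqI[of _ _ "0\<^sub>v n"]) auto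
    fix x y assume "x \<in> (\<lambda>v. Y *\<^sub>v v) ` A" "y \<in> (\<lambda>v. Y *\<^sub>v v) ` A"
    then obtain a b where "a \<in> A" "b \<in> A" "x = Y *\<^sub>v a" "y = Y *\<^sub>v b" by auto
    then show "x + y \<in> (\<lambda>v. Y *\<^sub>v v) ` A"
      using AD Y by (intro image_eqI[of _ _ "a + b"]) (auto simp: mult_add_distrib_mat_vec AC)
  next
    fix c x assume "x \<in> (\<lambda>v. Y *\<^sub>v v) ` A"
    then obtain a where "a \<in> A" "x = Y *\<^sub>v a" by auto
    then show "c \<cdot>\<^sub>v x \<in> (\<lambda>v. Y *\<^sub>v v) ` A"
      using AD Y by (intro image_eqI[of _ _ "c \<cdot>\<^sub>v a"]) (auto simp: mult_mat_vec AC)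
  qed
  show "is_subspace n {v \<in> A. Y *\<^sub>v v = 0\<^sub>v m}"
  proof (rule is_subspaceI)
    fix x y assume "x \<in> {v \<in> A. Y *\<^sub>v v = 0\<^sub>v m}" "y \<in> {v \<in> A. Y *\<^sub>v v = 0\<^sub>v m}"
    then show "x + y \<in> {v \<in> A. Y *\<^sub>v v = 0\<^sub>v m}"
      using AD Y by (auto simp: mult_add_distrib_mat_vec AC)
  next
    fix c x assume "x \<in> {v \<in> A. Y *\<^sub>v v = 0\<^sub>v m}"
    then show "c \<cdot>\<^sub>v x \<in> {v \<in> A. Y *\<^sub>v v = 0\<^sub>v m}"
      using AD Y by (auto simp: mult_mat_vec AC)
  qed (use AD Y in auto)
  interpret N: vec_space "TYPE('a)" n .
  interpret M: vec_space "TYPE('a)" m .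
  have sA: "subspace class_ring A N.V" using A unfolding is_subspace_def by auto
  interpret NA: vectorspace class_ring "N.vs A" using N.subspace_is_vs[OF sA] .
  have lm: "linear_map class_ring (N.vs A) M.V (\<lambda>v. Y *\<^sub>v v)"
    unfolding linear_map_def mod_hom_def mod_hom_axioms_def module_hom_def
    using NA.vectorspace_axioms M.vectorspace_axioms NA.module_axioms M.module_axioms
      AD Y by (auto simp: mult_add_distrib_mat_vec mult_mat_vec AC)
  interpret L: linear_map class_ring "N.vs A" M.V "\<lambda>v. Y *\<^sub>v v" by (rule lm)
  have "vectorspace.dim class_ring (M.vs L.imT) + vectorspace.dim class_ring (NA.vs L.kerT) = NA.dim"
    by (rule L.rank_nullity) (use subspace_fin_dim[OF A] in simp)
  moreover have "L.imT = (\<lambda>v. Y *\<^sub>v v) ` A" unfolding mod_hom.im_def[OF L.mod_hom_axioms] by simp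
  moreover have "L.kerT = {v \<in> A. Y *\<^sub>v v = 0\<^sub>v m}" unfolding mod_hom.ker_def[OF L.mod_hom_axioms] by simp
  ultimately show "sub_dim n A = sub_dim m ((\<lambda>v. Y *\<^sub>v v) ` A) + sub_dim n {v \<in> A. Y *\<^sub>v v = 0\<^sub>v m}"
    unfolding sub_dim_def by simp
qed

lemma subspace_basis:
  fixes W :: "'a::field vec set"
  assumes W: "is_subspace n W"
  shows "\<exists>B. finite B \<and> B \<subseteq> W \<and> module.lin_indpt class_ring (module_vec TYPE('a) n) B
     \<and> module.span class_ring (module_vec TYPE('a) n) B = W \<and> card B = sub_dim n W"
proof -
  interpret vec_space "TYPE('a)" n .
  have sW: "subspace class_ring W V" using W unfolding is_subspace_def by auto
  have subm: "submodule class_ring W V" using sW unfolding subspace_def by auto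
  interpret W: vectorspace class_ring "vs W" using subspace_is_vs[OF sW] .
  obtain B where B: "finite B" "W.basis B" using W.finite_basis_exists subspace_fin_dim(1)[OF W] by auto
  have BW: "B \<subseteq> W" using B(2) unfolding W.basis_def by auto
  have "lin_indpt B" using B(2) span_li_not_depend(2)[OF BW subm] unfolding W.basis_def by auto
  moreover have "span B = W" using B(2) span_li_not_depend(1)[OF BW subm] unfolding W.basis_def by auto
  moreover have "card B = sub_dim n W" unfolding sub_dim_def using W.dim_basis[OF B] by simp
  ultimately show ?thesis using B BW by auto
qed

lemma is_subspace_inter:
  fixes A W :: "'a::field vec set"
  assumes "is_subspace n A" "is_subspace n W"
  shows "is_subspace n (A \<inter> W)"
  using is_subspaceD[OF assms(1)] is_subspaceD[OF assms(2)] by (intro is_subspaceI) auto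

lemma sub_dim_grassmann_le:
  fixes A W :: "'a::field vec set"
  assumes A: "is_subspace n A" and W: "is_subspace n W"
  shows "sub_dim n A + sub_dim n W \<le> sub_dim n (A \<inter> W) + n"
proof -
  interpret vec_space "TYPE('a)" n .
  obtain BW where BW: "finite BW" "BW \<subseteq> W" "lin_indpt BW" "span BW = W" "card BW = sub_dim n W"
    using subspace_basis[OF W] by auto
  obtain BA where BA: "finite BA" "BA \<subseteq> A" "lin_indpt BA" "span BA = A" "card BA = sub_dim n A"
    using subspace_basis[OF A] by auto
  have Wc: "W \<subseteq> carrier_vec n" and Ac: "A \<subseteq> carrier_vec n" using is_subspaceD(1)[OF W] is_subspaceD(1)[OF A] by auto
  have sA: "submodule class_ring A V" and sW: "submodule class_ring W V"
    using A W unfolding is_subspace_def subspace_def by auto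
  let ?P = "\<lambda>C. C \<subseteq> BA \<and> lin_indpt (BW \<union> C) \<and> C \<inter> BW = {}"
  obtain C where C: "finite C" "maximal C ?P"
    using maximal_exists_superset[of BA ?P "{}"] BA(1) BW(3) by auto
  have CBA: "C \<subseteq> BA" and liC: "lin_indpt (BW \<union> C)" and disj: "C \<inter> BW = {}"
    using C(2) unfolding maximal_def by auto
  have BWCc: "BW \<union> C \<subseteq> carrier_vec n" using BW(2) CBA BA(2) Wc Ac by auto
  have card1: "card BW + card C \<le> n"
  proof -
    have "card (BW \<union> C) \<le> n" using li_le_dim(2)[OF fin_dim BWCc liC] dim_is_n by simp
    moreover have "card (BW \<union> C) = card BW + card C" using disj BW(1) C(1) by (simp add: card_Un_disjoint inf_commute)
    ultimately show ?thesis by simp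
  qed
  have BAspan: "BA \<subseteq> span (BW \<union> C)"
  proof
    fix b assume b: "b \<in> BA"
    show "b \<in> span (BW \<union> C)"
    proof (cases "b \<in> BW \<union> C")
      case True then show ?thesis using in_own_span[OF BWCc] by auto
    next
      case False
      show ?thesis
      proof (rule ccontr)
        assume nb: "b \<notin> span (BW \<union> C)"
        have bc: "b \<in> carrier_vec n" using b BA(2) Ac by auto
        have "lin_indpt (BW \<union> C \<union> {b})" using lin_dep_iff_in_span[OF BWCc liC bc False] nb by auto
        hence "?P (insert b C)" using b CBA disj False by auto
        moreover have "C \<subseteq> insert b C" by auto
        ultimately have "insert b C = C" using C(2) unfolding maximal_def by blast
        thus False using False by auto
      qed
    qed
  qed
  have spanC_A: "span C \<subseteq> A" using span_is_subset[OF _ sA] CBA BA(2) by auto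
  have Cc: "C \<subseteq> carrier_vec n" using BWCc by auto
  have sC: "submodule class_ring (span C) V" by (rule span_is_submodule[OF Cc])
  have A_sub: "A \<subseteq> submodule_sum (A \<inter> W) (span C)"
  proof
    fix a assume a: "a \<in> A"
    have "a \<in> span (BW \<union> C)" using span_is_subset[OF BAspan span_is_submodule[OF BWCc]] BA(4) a by auto
    also have "\<dots> = submodule_sum (span BW) (span C)" by (rule span_union_is_sum) (use BWCc in auto)
    finally obtain w c where wc: "w \<in> W" "c \<in> span C" "a = w + c"
      unfolding submodule_sum_def BW(4) by auto
    have cA: "c \<in> A" using wc spanC_A by auto
    have wcar: "w \<in> carrier_vec n" and ccar: "c \<in> carrier_vec n" using wc(1) Wc cA Ac by auto
    have "w = a + (-1) \<cdot>\<^sub>v c" using wc(3) wcar ccar by auto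
    hence "w \<in> A" using is_subspaceD(3,4)[OF A] a cA by auto
    thus "a \<in> submodule_sum (A \<inter> W) (span C)" unfolding submodule_sum_def using wc by auto
  qed
  have sAW: "is_subspace n (A \<inter> W)" by (rule is_subspace_inter[OF A W])
  have isC: "is_subspace n (span C)" unfolding is_subspace_def using span_is_subspace[OF Cc] by auto
  have sub_AW: "subspace class_ring (A \<inter> W) V" and sub_C: "subspace class_ring (span C) V"
    using sAW isC unfolding is_subspace_def by auto
  have isS: "is_subspace n (submodule_sum (A \<inter> W) (span C))"
    unfolding is_subspace_def by (rule sum_is_subspace[OF sub_AW sub_C])
  have "sub_dim n A \<le> sub_dim n (submodule_sum (A \<inter> W) (span C))"
    by (rule sub_dim_mono[OF A isS A_sub])
  also have "\<dots> \<le> sub_dim n (A \<inter> W) + sub_dim n (span C)"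
    unfolding sub_dim_def
    by (rule dim_subadditive[OF sub_AW subspace_fin_dim(1)[OF sAW] sub_C subspace_fin_dim(1)[OF isC]])
  also have "sub_dim n (span C) \<le> card C"
  proof -
    interpret SC: vectorspace class_ring "vs (span C)" using subspace_is_vs[OF sub_C] .
    have CS: "C \<subseteq> span C" using in_own_span[OF Cc] .
    have "SC.gen_set C" using span_li_not_depend(1)[OF CS sC] by simp
    hence "SC.dim \<le> card C" using SC.gen_ge_dim[OF C(1)] CS by auto
    thus ?thesis unfolding sub_dim_def by simp
  qed
  finally show ?thesis using card1 BW(5) BA(5) by simp
qed

lemma pow_mat_Suc_left:
  fixes A :: "'a::semiring_1 mat"
  assumes A: "A \<in> carrier_mat n n"
  shows "A ^\<^sub>m Suc k = A * A ^\<^sub>m k"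
proof (induction k)
  case 0 then show ?case using A by simp
next
  case (Suc k)
  have "A ^\<^sub>m Suc (Suc k) = (A * A ^\<^sub>m k) * A" using Suc by simp
  also have "\<dots> = A * (A ^\<^sub>m k * A)" using A by (intro assoc_mult_mat) auto
  finally show ?case by simp
qed

lemma pow_mat_vec_Suc:
  fixes A :: "'a::semiring_1 mat"
  assumes A: "A \<in> carrier_mat n n" and v: "v \<in> carrier_vec n"
  shows "A ^\<^sub>m Suc k *\<^sub>v v = A ^\<^sub>m k *\<^sub>v (A *\<^sub>v v)"
    "A ^\<^sub>m Suc k *\<^sub>v v = A *\<^sub>v (A ^\<^sub>m k *\<^sub>v v)"
proof -
  show "A ^\<^sub>m Suc k *\<^sub>v v = A ^\<^sub>m k *\<^sub>v (A *\<^sub>v v)"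
    using assoc_mult_mat_vec[OF pow_carrier_mat[OF A] A v, of k] by simp
  have "A ^\<^sub>m Suc k *\<^sub>v v = (A * A ^\<^sub>m k) *\<^sub>v v" by (simp only: pow_mat_Suc_left[OF A])
  also have "\<dots> = A *\<^sub>v (A ^\<^sub>m k *\<^sub>v v)" by (rule assoc_mult_mat_vec[OF A pow_carrier_mat[OF A] v])
  finally show "A ^\<^sub>m Suc k *\<^sub>v v = A *\<^sub>v (A ^\<^sub>m k *\<^sub>v v)" .
qed

lemma mult_mat_vec_zero_carrier:
  fixes A :: "'a::semiring_1 mat"
  shows "A \<in> carrier_mat m n \<Longrightarrow> A *\<^sub>v 0\<^sub>v n = 0\<^sub>v m"
  by (intro eq_vecI) (auto simp: mult_mat_vec_def scalar_prod_def)

context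
  fixes X :: "'a::field mat" and n :: nat and W :: "'a vec set"
  assumes X: "X \<in> carrier_mat n n" and W: "is_subspace n W"
begin

definition Uinv :: "'a vec set" where
  "Uinv = {v \<in> carrier_vec n. \<forall>k. X ^\<^sub>m k *\<^sub>v v \<in> W}"

lemma Uinv_subspace: "is_subspace n Uinv"
proof (rule is_subspaceI)
  note WD = is_subspaceD[OF W]
  show "Uinv \<subseteq> carrier_vec n" unfolding Uinv_def by auto
  show "0\<^sub>v n \<in> Uinv" unfolding Uinv_def using X WD(2) mult_mat_vec_zero_carrier[OF pow_carrier_mat[OF X]] by auto
  fix x y assume "x \<in> Uinv" "y \<in> Uinv"
  then show "x + y \<in> Uinv" unfolding Uinv_def using X WD(3)
    by (auto simp: mult_add_distrib_mat_vec[of _ n n])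
next
  note WD = is_subspaceD[OF W]
  fix c x assume "x \<in> Uinv"
  then show "c \<cdot>\<^sub>v x \<in> Uinv" unfolding Uinv_def using X WD(4)
    by (auto simp: mult_mat_vec[of _ n n])
qed

lemma Uinv_W: "Uinv \<subseteq> W"
proof
  fix v assume "v \<in> Uinv"
  then have "X ^\<^sub>m 0 *\<^sub>v v \<in> W" "v \<in> carrier_vec n" unfolding Uinv_def by blast+
  then show "v \<in> W" using X by simp
qed

lemma Uinv_iff: "v \<in> carrier_vec n \<Longrightarrow> v \<in> Uinv \<longleftrightarrow> v \<in> W \<and> X *\<^sub>v v \<in> Uinv"
proof -
  assume v: "v \<in> carrier_vec n"
  have Xv: "X *\<^sub>v v \<in> carrier_vec n" using X v by auto
  show ?thesis
  proof
    assume u: "v \<in> Uinv"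
    then show "v \<in> W \<and> X *\<^sub>v v \<in> Uinv" using Uinv_W Xv pow_mat_vec_Suc(1)[OF X v] unfolding Uinv_def
      by (auto simp del: pow_mat.simps) (metis pow_mat_vec_Suc(1)[OF X v])
  next
    assume h: "v \<in> W \<and> X *\<^sub>v v \<in> Uinv"
    show "v \<in> Uinv" unfolding Uinv_def
    proof (intro CollectI conjI allI v)
      fix k show "X ^\<^sub>m k *\<^sub>v v \<in> W"
      proof (cases k)
        case 0 then show ?thesis using h X v by simp
      next
        case (Suc k') then show ?thesis using h pow_mat_vec_Suc(1)[OF X v, of k'] unfolding Uinv_def by auto
      qed
    qed
  qed
qed

lemma Uinv_inv: "u \<in> Uinv \<Longrightarrow> X *\<^sub>v u \<in> Uinv"
  using Uinv_iff unfolding Uinv_def by auto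

definition fU :: "'a vec set \<Rightarrow> int" where
  "fU S = int (sub_dim n S) - int (sub_dim n (S \<inter> Uinv))"

lemma fU_image:
  assumes S: "is_subspace n S"
  shows "fU ((\<lambda>v. X *\<^sub>v v) ` S) \<ge> fU S - int (n - sub_dim n W)"
proof -
  note SD = is_subspaceD[OF S]
  note UD = is_subspaceD[OF Uinv_subspace]
  define A' where "A' = {a \<in> S. X *\<^sub>v a \<in> Uinv}"
  have SC: "\<And>x. x \<in> S \<Longrightarrow> x \<in> carrier_vec n" using SD(1) by auto
  have A': "is_subspace n A'"
  proof (rule is_subspaceI)
    show "A' \<subseteq> carrier_vec n" unfolding A'_def using SD(1) by auto
    show "0\<^sub>v n \<in> A'" unfolding A'_def using SD(2) UD(2) X by (auto simp: mult_mat_vec_zero_carrier)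
    fix x y assume "x \<in> A'" "y \<in> A'"
    then show "x + y \<in> A'" unfolding A'_def using X SD(3) UD(3) SC
      by (auto simp: mult_add_distrib_mat_vec[of _ n n])
  next
    fix c x assume "x \<in> A'"
    then show "c \<cdot>\<^sub>v x \<in> A'" unfolding A'_def using X SD(4) UD(4) SC
      by (auto simp: mult_mat_vec[of _ n n])
  qed
  note rn1 = sub_dim_rank_nullity[OF X S]
  note rn2 = sub_dim_rank_nullity[OF X A']
  have e1: "(\<lambda>v. X *\<^sub>v v) ` A' = (\<lambda>v. X *\<^sub>v v) ` S \<inter> Uinv" unfolding A'_def by auto
  have e2: "{v \<in> A'. X *\<^sub>v v = 0\<^sub>v n} = {v \<in> S. X *\<^sub>v v = 0\<^sub>v n}" unfolding A'_def using UD(2) by auto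
  have e3: "A' \<inter> W = S \<inter> Uinv" unfolding A'_def using Uinv_iff SC by auto
  have g: "sub_dim n A' + sub_dim n W \<le> sub_dim n (S \<inter> Uinv) + n"
    using sub_dim_grassmann_le[OF A' W] e3 by simp
  have "sub_dim n W \<le> n" by (rule subspace_fin_dim(2)[OF W])
  then show ?thesis unfolding fU_def using rn1(3) rn2(3) e1 e2 g by simp
qed

lemma fU_mono:
  assumes S: "is_subspace n S" and T: "is_subspace n T" and TS: "T \<subseteq> S"
  shows "fU S - fU T \<le> int (sub_dim n S) - int (sub_dim n T)"
proof -
  have "sub_dim n (T \<inter> Uinv) \<le> sub_dim n (S \<inter> Uinv)"
    using sub_dim_mono[OF is_subspace_inter[OF T Uinv_subspace] is_subspace_inter[OF S Uinv_subspace]] TS by auto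
  then show ?thesis unfolding fU_def by simp
qed

definition ImX :: "nat \<Rightarrow> 'a vec set" where
  "ImX t = (\<lambda>v. X ^\<^sub>m t *\<^sub>v v) ` carrier_vec n"

lemma ImX_subspace: "is_subspace n (ImX t)"
  unfolding ImX_def by (rule sub_dim_rank_nullity(1)[OF pow_carrier_mat[OF X] is_subspace_full])

lemma ImX_Suc: "ImX (Suc t) = (\<lambda>v. X *\<^sub>v v) ` ImX t"
  unfolding ImX_def using pow_mat_vec_Suc(2)[OF X] by (auto simp del: pow_mat.simps)

lemma ImX_Suc_sub: "ImX (Suc t) \<subseteq> ImX t"
  unfolding ImX_def using pow_mat_vec_Suc(1)[OF X] X by (auto simp del: pow_mat.simps)

lemma ImX_0: "ImX 0 = carrier_vec n"
  unfolding ImX_def using X by auto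

lemma fU_full: "fU (carrier_vec n) = int n - int (sub_dim n Uinv)"
  unfolding fU_def using sub_dim_full[of n] Uinv_def by (simp add: Int_absorb1)

lemma fU_zero: "fU {0\<^sub>v n} = 0"
proof -
  have "{0\<^sub>v n} \<inter> Uinv = {0\<^sub>v n}" using is_subspaceD(2)[OF Uinv_subspace] by auto
  then show ?thesis unfolding fU_def by simp
qed

lemma fU_step: "fU (ImX t) - fU (ImX (Suc t)) \<le> min (int (n - sub_dim n W)) (int (sub_dim n (ImX t)) - int (sub_dim n (ImX (Suc t))))"
  using fU_image[OF ImX_subspace[of t]] fU_mono[OF ImX_subspace[of t] ImX_subspace[of "Suc t"] ImX_Suc_sub]
  unfolding ImX_Suc[symmetric] by simp

lemma fU_telescope: "fU (ImX 0) - fU (ImX T) \<le> (\<Sum>t<T. min (int (n - sub_dim n W)) (int (sub_dim n (ImX t)) - int (sub_dim n (ImX (Suc t)))))"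
proof (induction T)
  case 0 then show ?case by simp
next
  case (Suc T) then show ?case using fU_step[of T] by (smt (verit) lessThan_Suc_eq_insert_0 sum.lessThan_Suc)
qed

lemma Uinv_bound:
  assumes T: "X ^\<^sub>m T = 0\<^sub>m n n"
  shows "int n - int (sub_dim n Uinv) \<le> (\<Sum>t<T. min (int (n - sub_dim n W)) (int (sub_dim n (ImX t)) - int (sub_dim n (ImX (Suc t)))))"
proof -
  have "ImX T = {0\<^sub>v n}" unfolding ImX_def T
  proof (intro equalityI subsetI)
    fix x :: "'a vec" assume "x \<in> (\<lambda>v. 0\<^sub>m n n *\<^sub>v v) ` carrier_vec n"
    then show "x \<in> {0\<^sub>v n}" by auto
  next
    fix x :: "'a vec" assume "x \<in> {0\<^sub>v n}"
    then show "x \<in> (\<lambda>v. 0\<^sub>m n n *\<^sub>v v) ` carrier_vec n"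
      using mult_mat_vec_zero_carrier[of "0\<^sub>m n n" n n] by (intro image_eqI[where x="0\<^sub>v n"]) auto
  qed
  then show ?thesis using fU_telescope[of T] fU_full fU_zero ImX_0 by simp
qed

end

lemma filter_take_sorted:
  assumes "sorted_wrt (\<ge>) (xs :: nat list)"
  shows "length (filter (\<lambda>l. t < l) (take m xs)) = min m (length (filter (\<lambda>l. t < l) xs))"
  using assms
proof (induction xs arbitrary: m)
  case Nil then show ?case by simp
next
  case (Cons a xs)
  show ?case
  proof (cases m)
    case 0 then show ?thesis by simp
  next
    case (Suc m')
    show ?thesis
    proof (cases "t < a")
      case True then show ?thesis using Cons Suc by simp
    next
      case False
      then have "\<forall>l\<in>set xs. \<not> t < l" using Cons.prems by auto
      then have "filter (\<lambda>l. t < l) xs = []" "filter (\<lambda>l. t < l) (take m' xs) = []"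
        by (auto simp: filter_empty_conv dest: in_set_takeD)
      then show ?thesis using False Suc by simp
    qed
  qed
qed

lemma sum_ind_lt: "(\<Sum>t<T. (if t < a then 1 else 0 :: nat)) = min T a"
  by (induction T) auto

lemma sum_count_gt: "(\<Sum>t<T. length (filter (\<lambda>l. t < l) (xs :: nat list))) = sum_list (map (min T) xs)"
proof (induction xs)
  case Nil then show ?case by simp
next
  case (Cons a xs)
  have "(\<Sum>t<T. length (filter (\<lambda>l. t < l) (a # xs))) =
        (\<Sum>t<T. (if t < a then 1 else 0) + length (filter (\<lambda>l. t < l) xs))"
    by (intro sum.cong) auto
  also have "\<dots> = (\<Sum>t<T. (if t < a then 1 else 0)) + (\<Sum>t<T. length (filter (\<lambda>l. t < l) xs))"
    by (rule sum.distrib)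
  also have "\<dots> = min T a + sum_list (map (min T) xs)" using Cons sum_ind_lt by simp
  finally show ?case by simp
qed

lemma comb_bound:
  assumes "sorted_wrt (\<ge>) (xs :: nat list)"
  shows "(\<Sum>t<T. min m (length (filter (\<lambda>l. t < l) xs))) \<le> sum_list (take m xs)"
proof -
  have "(\<Sum>t<T. min m (length (filter (\<lambda>l. t < l) xs))) = (\<Sum>t<T. length (filter (\<lambda>l. t < l) (take m xs)))"
    using filter_take_sorted[OF assms] by simp
  also have "\<dots> = sum_list (map (min T) (take m xs))" by (rule sum_count_gt)
  also have "\<dots> \<le> sum_list (take m xs)"
  proof -
    have "\<And>ys::nat list. sum_list (map (min T) ys) \<le> sum_list ys" by (induct_tac ys) auto
    then show ?thesis .
  qed
  finally show ?thesis .
qed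

lemma sum_list_min_Suc: "sum_list (map (min (Suc t)) (xs :: nat list)) = sum_list (map (min t) xs) + length (filter (\<lambda>l. t < l) xs)"
  by (induction xs) auto

lemma filter_all_pos:
  assumes "\<forall>x\<in>set xs. (0::nat) < fst x"
    and "sum_list (map fst xs) \<le> sum_list (map (\<lambda>x. min K (fst x)) (filter P xs))"
  shows "\<forall>x\<in>set xs. P x"
proof -
  have le: "sum_list (map (\<lambda>x. min K (fst x)) (filter P xs)) + sum_list (map fst (filter (\<lambda>x. \<not> P x) xs)) \<le> sum_list (map fst xs)"
    by (induction xs) auto
  show ?thesis
  proof (rule ccontr)
    assume "\<not> (\<forall>x\<in>set xs. P x)"
    then obtain x where x: "x \<in> set xs" "\<not> P x" by auto
    then have "fst x \<in> set (map fst (filter (\<lambda>x. \<not> P x) xs))" by auto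
    then have "fst x \<le> sum_list (map fst (filter (\<lambda>x. \<not> P x) xs))" by (rule member_le_sum_list) simp
    then show False using le assms x by auto
  qed
qed

lemma kernel_dim_sub_dim: "kernel_dim (A :: 'a::field mat) = sub_dim (dim_col A) (mat_kernel A)"
  unfolding kernel_dim_def sub_dim_def by simp

lemma sub_dim_image_kernel:
  fixes Y :: "'a::field mat"
  assumes Y: "Y \<in> carrier_mat m n"
  shows "sub_dim m ((\<lambda>v. Y *\<^sub>v v) ` carrier_vec n) + kernel_dim Y = n"
proof -
  have "mat_kernel Y = {v \<in> carrier_vec n. Y *\<^sub>v v = 0\<^sub>v m}" unfolding mat_kernel_def using Y by auto
  then show ?thesis using sub_dim_rank_nullity(3)[OF Y is_subspace_full] sub_dim_full[of n, where 'a='a] Y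
    kernel_dim_sub_dim[of Y] by simp
qed

lemma kernel_dim_pow_jnf:
  fixes X :: "'a::field mat"
  assumes X: "X \<in> carrier_mat n n"
    and nilp: "\<exists>k. X ^\<^sub>m k = 0\<^sub>m n n"
    and jnf: "jordan_nf X n_as"
    and blocks: "mset (map fst n_as) = mset ls"
    and sumls: "sum_list ls = n"
  shows "kernel_dim (X ^\<^sub>m t) = sum_list (map (min t) ls)"
proof -
  have cm: "char_matrix X 0 = X" unfolding char_matrix_def using X by (intro eq_matI) auto
  have dge: "\<And>k. kernel_dim (X ^\<^sub>m k) = (\<Sum> n \<leftarrow> map fst [(n, e)\<leftarrow>n_as . e = 0]. min k n)"
    using dim_gen_eigenspace[OF jnf, of 0] unfolding dim_gen_eigenspace_def cm by simp
  have sumfst: "sum_list (map fst n_as) = n"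
    using blocks sumls by (metis sum_mset_sum_list)
  obtain K where K: "X ^\<^sub>m K = 0\<^sub>m n n" using nilp by auto
  have "kernel_dim (X ^\<^sub>m K) = n"
  proof -
    have "mat_kernel (0\<^sub>m n n :: 'a mat) = carrier_vec n" unfolding mat_kernel_def
      by (auto simp: mult_mat_vec_def scalar_prod_def)
    then show ?thesis unfolding K kernel_dim_sub_dim using sub_dim_full[of n] by simp
  qed
  hence "sum_list (map fst n_as) \<le> sum_list (map (\<lambda>x. min K (fst x)) (filter (\<lambda>x. snd x = 0) n_as))"
    using dge[of K] sumfst by (simp add: case_prod_beta' comp_def)
  moreover have "\<forall>x\<in>set n_as. 0 < fst x" using jnf unfolding jordan_nf_def by (auto simp: image_iff)
  ultimately have "\<forall>x\<in>set n_as. snd x = 0" using filter_all_pos by blast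
  hence filt: "[(n, e)\<leftarrow>n_as . e = 0] = n_as" by (auto simp: case_prod_beta')
  have "kernel_dim (X ^\<^sub>m t) = sum_list (map (min t) (map fst n_as))" using dge[of t] filt by simp
  also have "\<dots> = sum_list (map (min t) ls)"
    by (metis blocks mset_map sum_mset_sum_list)
  finally show ?thesis .
qed

lemma part_i:
  fixes X :: "'a::field mat" and W :: "'a vec set"
  assumes part: "is_partition ls n"
    and X: "X \<in> carrier_mat n n"
    and nilp: "\<exists>k. X ^\<^sub>m k = 0\<^sub>m n n"
    and jnf: "jordan_nf X n_as"
    and blocks: "mset (map fst n_as) = mset ls"
    and W: "is_subspace n W"
  shows "is_subspace n (Uinv X n W) \<and> Uinv X n W \<subseteq> W \<and> (\<forall>u\<in>Uinv X n W. X *\<^sub>v u \<in> Uinv X n W) \<and>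
         sub_dim n (Uinv X n W) \<ge> sum_list (drop (n - sub_dim n W) ls)"
proof (intro conjI ballI)
  show "is_subspace n (Uinv X n W)" by (rule Uinv_subspace[OF X W])
  show "Uinv X n W \<subseteq> W" by (rule Uinv_W[OF X W])
  show "\<And>u. u \<in> Uinv X n W \<Longrightarrow> X *\<^sub>v u \<in> Uinv X n W" by (rule Uinv_inv[OF X W])
  have sorted: "sorted_wrt (\<ge>) ls" and sumls: "sum_list ls = n" using part unfolding is_partition_def by auto
  obtain K where K: "X ^\<^sub>m K = 0\<^sub>m n n" using nilp by auto
  define m where "m = n - sub_dim n W"
  define cnt where "cnt t = length (filter (\<lambda>l. t < l) ls)" for t
  have ker: "kernel_dim (X ^\<^sub>m t) = sum_list (map (min t) ls)" for t
    by (rule kernel_dim_pow_jnf[OF X nilp jnf blocks sumls])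
  have dimIm: "sub_dim n (ImX X n t) + sum_list (map (min t) ls) = n" for t
    using sub_dim_image_kernel[OF pow_carrier_mat[OF X, of t]] ker[of t] unfolding ImX_def[OF X W] by simp
  have d: "int (sub_dim n (ImX X n t)) - int (sub_dim n (ImX X n (Suc t))) = int (cnt t)" for t
    using dimIm[of t] dimIm[of "Suc t"] sum_list_min_Suc[of t ls] unfolding cnt_def by simp
  have "int n - int (sub_dim n (Uinv X n W)) \<le> (\<Sum>t<K. min (int m) (int (cnt t)))"
    using Uinv_bound[OF X W K] d unfolding m_def by simp
  also have "\<dots> = int (\<Sum>t<K. min m (cnt t))" by (simp add: of_nat_sum of_nat_min)
  also have "(\<Sum>t<K. min m (cnt t)) \<le> sum_list (take m ls)" unfolding cnt_def by (rule comb_bound[OF sorted])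
  finally have "int n - int (sub_dim n (Uinv X n W)) \<le> int (sum_list (take m ls))" by simp
  moreover have "sum_list (take m ls) + sum_list (drop m ls) = n"
    using sumls by (metis append_take_drop_id sum_list_append)
  ultimately show "sub_dim n (Uinv X n W) \<ge> sum_list (drop (n - sub_dim n W) ls)" unfolding m_def by simp
qed

definition W0 :: "nat \<Rightarrow> nat \<Rightarrow> 'a::field vec set" where
  "W0 n i = {v \<in> carrier_vec n. \<forall>j. i \<le> j \<longrightarrow> j < n \<longrightarrow> v $ j = 0}"

lemma W0_kernel:
  assumes "i \<le> n"
  shows "mat_kernel ((jordan_block n (0::'a::field)) ^\<^sub>m i) = W0 n i"
proof -
  let ?J = "(jordan_block n (0::'a)) ^\<^sub>m i"
  have Jc: "?J \<in> carrier_mat n n" by (rule pow_carrier_mat) (simp add: jordan_block_def)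
  have dcr: "dim_col ?J = n" "dim_row ?J = n" using Jc by auto
  have J: "?J = mat n n (\<lambda> (r,c). if c \<ge> r \<and> c - r = i then 1 else 0)" by (rule jordan_block_zero_pow)
  have row: "(?J *\<^sub>v v) $ r = (if r + i < n then v $ (r + i) else 0)" if v: "v \<in> carrier_vec n" and r: "r < n" for v r
  proof -
    have "(?J *\<^sub>v v) $ r = (\<Sum>c = 0..<n. (if c \<ge> r \<and> c - r = i then 1 else 0) * v $ c)"
      unfolding J using v r by (simp add: mult_mat_vec_def scalar_prod_def)
    also have "\<dots> = (\<Sum>c = 0..<n. (if c = r + i then v $ c else 0))"
      by (intro sum.cong) auto
    also have "\<dots> = (if r + i < n then v $ (r + i) else 0)" by (simp add: sum.delta')
    finally show ?thesis .
  qed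
  show ?thesis
  proof (intro equalityI subsetI)
    fix v assume "v \<in> mat_kernel ?J"
    then have v: "v \<in> carrier_vec n" and z: "?J *\<^sub>v v = 0\<^sub>v n" unfolding mat_kernel_def dcr by auto
    show "v \<in> W0 n i" unfolding W0_def
    proof (intro CollectI conjI allI impI v)
      fix j assume j: "i \<le> j" "j < n"
      have "(?J *\<^sub>v v) $ (j - i) = v $ j" using row[OF v, of "j - i"] j by simp
      then show "v $ j = 0" using z j by simp
    qed
  next
    fix v :: "'a vec" assume "v \<in> W0 n i"
    then have v: "v \<in> carrier_vec n" and z: "\<And>j. i \<le> j \<Longrightarrow> j < n \<Longrightarrow> v $ j = 0" unfolding W0_def by auto
    have "?J *\<^sub>v v = 0\<^sub>v n" by (intro eq_vecI) (use row[OF v] z in auto)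
    then show "v \<in> mat_kernel ?J" unfolding mat_kernel_def dcr using v by auto
  qed
qed

lemma W0_subspace: "is_subspace n (W0 n i :: 'a::field vec set)"
  unfolding W0_def by (rule is_subspaceI) auto

lemma W0_dim:
  assumes "i \<le> n"
  shows "sub_dim n (W0 n i :: 'a::field vec set) = i"
proof -
  have Jc: "(jordan_block n (0::'a)) ^\<^sub>m i \<in> carrier_mat n n" by (rule pow_carrier_mat) (simp add: jordan_block_def)
  then have dc: "dim_col ((jordan_block n (0::'a)) ^\<^sub>m i) = n" by auto
  have "kernel_dim ((jordan_block n (0::'a)) ^\<^sub>m i) = min i n"
    unfolding kernel_dim_def dc by (rule dim_kernel_zero_jordan_block_pow[where 'a='a, of n i])
  then show ?thesis using kernel_dim_sub_dim[of "(jordan_block n (0::'a)) ^\<^sub>m i"] W0_kernel[OF assms, where 'a='a] assms dc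
    by (simp del: pow_mat.simps)
qed

lemma mat_rank_image:
  fixes A :: "'a::field mat"
  assumes A: "A \<in> carrier_mat m k"
  shows "mat_rank A = sub_dim m ((\<lambda>v. A *\<^sub>v v) ` carrier_vec k)"
proof -
  interpret vec_space "TYPE('a)" m .
  have "col_space A = {y\<in>carrier_vec (dim_row A). \<exists>x\<in>carrier_vec (dim_col A). A *\<^sub>v x = y}"
    by (rule col_space_eq[OF A])
  also have "\<dots> = (\<lambda>v. A *\<^sub>v v) ` carrier_vec k" using A by auto
  finally have cs: "span (set (cols A)) = (\<lambda>v. A *\<^sub>v v) ` carrier_vec k" unfolding col_space_def .
  have "mat_rank A = rank A" unfolding mat_rank_def using A by simp
  also have "\<dots> = sub_dim m ((\<lambda>v. A *\<^sub>v v) ` carrier_vec k)" unfolding rank_def sub_dim_def cs by simp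
  finally show ?thesis .
qed

lemma mat_rank_kernel:
  fixes A :: "'a::field mat"
  assumes A: "A \<in> carrier_mat m k"
  shows "mat_rank A + kernel_dim A = k"
  using mat_rank_image[OF A] sub_dim_image_kernel[OF A] by simp

lemma submatrix_prefix:
  fixes X :: "'a mat"
  assumes X: "X \<in> carrier_mat n n" and i: "i \<le> n"
  shows "submatrix X {..<i} {..<i} \<in> carrier_mat i i"
    "\<And>r c. r < i \<Longrightarrow> c < i \<Longrightarrow> submatrix X {..<i} {..<i} $$ (r, c) = X $$ (r, c)"
proof -
  have card: "card {r. r < dim_row X \<and> r \<in> {..<i}} = i" "card {r. r < dim_col X \<and> r \<in> {..<i}} = i"
  proof -
    have "{r. r < dim_row X \<and> r \<in> {..<i}} = {..<i}" "{r. r < dim_col X \<and> r \<in> {..<i}} = {..<i}"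
      using X i by auto
    then show "card {r. r < dim_row X \<and> r \<in> {..<i}} = i" "card {r. r < dim_col X \<and> r \<in> {..<i}} = i" by auto
  qed
  show "submatrix X {..<i} {..<i} \<in> carrier_mat i i" unfolding submatrix_def card by simp
  have pick: "pick {..<i} r = r" if "r < i" for r
  proof -
    have "{a \<in> {..<i}. a < r} = {..<r}" using that by auto
    then show ?thesis using pick_card_in_set[of r "{..<i}"] that by simp
  qed
  fix r c assume "r < i" "c < i"
  then show "submatrix X {..<i} {..<i} $$ (r, c) = X $$ (r, c)"
    using submatrix_index[of r X "{..<i}" c "{..<i}"] card pick by simp
qed

definition restr_mat :: "nat \<Rightarrow> nat \<Rightarrow> 'a::field mat" where
  "restr_mat i n = mat i n (\<lambda>(r, c). if r = c then 1 else 0)"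

lemma restr_mat_vec:
  assumes u: "u \<in> carrier_vec n" and i: "i \<le> n"
  shows "restr_mat i n *\<^sub>v u = vec i (\<lambda>r. u $ r)"
proof (intro eq_vecI)
  fix r assume r: "r < dim_vec (vec i (\<lambda>r. u $ r))"
  then have r': "r < i" by simp
  have "(restr_mat i n *\<^sub>v u) $ r = (\<Sum>c = 0..<n. (if r = c then 1 else 0) * u $ c)"
    unfolding restr_mat_def using u r' by (simp add: mult_mat_vec_def scalar_prod_def)
  also have "\<dots> = (\<Sum>c = 0..<n. (if r = c then u $ c else 0))" by (intro sum.cong) auto
  also have "\<dots> = u $ r" using r' i by (simp add: sum.delta)
  finally show "(restr_mat i n *\<^sub>v u) $ r = vec i (\<lambda>r. u $ r) $ r" using r' by simp
qed (simp add: restr_mat_def)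

lemma restr_commute:
  fixes X :: "'a::field mat"
  assumes X: "X \<in> carrier_mat n n" and i: "i \<le> n" and u: "u \<in> W0 n i"
  shows "submatrix X {..<i} {..<i} *\<^sub>v (restr_mat i n *\<^sub>v u) = restr_mat i n *\<^sub>v (X *\<^sub>v u)"
proof -
  let ?Y = "submatrix X {..<i} {..<i}"
  have uc: "u \<in> carrier_vec n" and uz: "\<And>j. i \<le> j \<Longrightarrow> j < n \<Longrightarrow> u $ j = 0" using u unfolding W0_def by auto
  note Yp = submatrix_prefix[OF X i]
  show ?thesis
  proof (intro eq_vecI)
    fix r assume "r < dim_vec (restr_mat i n *\<^sub>v (X *\<^sub>v u))"
    then have r: "r < i" by (simp add: restr_mat_def)
    have "(?Y *\<^sub>v (restr_mat i n *\<^sub>v u)) $ r = (\<Sum>c = 0..<i. X $$ (r, c) * u $ c)"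
      using Yp r uc i unfolding restr_mat_vec[OF uc i]
      by (auto simp: mult_mat_vec_def scalar_prod_def row_def intro!: sum.cong)
    also have "\<dots> = (\<Sum>c = 0..<n. X $$ (r, c) * u $ c)"
      by (rule sum.mono_neutral_left) (use i uz in auto)
    also have "\<dots> = (restr_mat i n *\<^sub>v (X *\<^sub>v u)) $ r"
      using X uc r i unfolding restr_mat_vec[OF mult_mat_vec_carrier[OF X uc] i]
      by (auto simp: mult_mat_vec_def scalar_prod_def row_def)
    finally show "(?Y *\<^sub>v (restr_mat i n *\<^sub>v u)) $ r = (restr_mat i n *\<^sub>v (X *\<^sub>v u)) $ r" .
  qed (use Yp(1) in \<open>simp add: restr_mat_def\<close>)
qed

lemma sub_dim_zero: "sub_dim n {0\<^sub>v n :: 'a::field vec} = 0"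
proof -
  interpret vec_space "TYPE('a)" n .
  have "span {} = {0\<^sub>v n}" using span_empty by simp
  then show ?thesis using dim_zero_vs unfolding sub_dim_def by simp
qed

lemma stable_rank_le:
  fixes A :: "'a::field mat"
  assumes A: "A \<in> carrier_mat k k" and b: "\<And>N. N \<ge> K \<Longrightarrow> mat_rank (A ^\<^sub>m N) \<le> b"
  shows "stable_rank A \<le> b"
proof -
  define r where "r N = mat_rank (A ^\<^sub>m N)" for N
  have img: "r N = sub_dim k ((\<lambda>v. A ^\<^sub>m N *\<^sub>v v) ` carrier_vec k)" for N
    unfolding r_def by (rule mat_rank_image[OF pow_carrier_mat[OF A]])
  have dec: "r (Suc N) \<le> r N" for N
  proof -
    have "(\<lambda>v. A ^\<^sub>m Suc N *\<^sub>v v) ` carrier_vec k \<subseteq> (\<lambda>v. A ^\<^sub>m N *\<^sub>v v) ` carrier_vec k"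
      using pow_mat_vec_Suc(1)[OF A] A by (auto simp del: pow_mat.simps)
    then show ?thesis unfolding img
      by (intro sub_dim_mono sub_dim_rank_nullity(1)[OF pow_carrier_mat[OF A] is_subspace_full])
  qed
  have decm: "r m \<le> r N" if "N \<le> m" for N m using that
  proof (induction m rule: dec_induct)
    case base then show ?case by simp
  next
    case (step m) then show ?case using dec[of m] by simp
  qed
  define v where "v = (LEAST x. \<exists>N. r N = x)"
  have "\<exists>N. r N = v" unfolding v_def by (rule LeastI[of _ "r 0"]) auto
  then obtain N0 where N0: "r N0 = v" by auto
  have const: "\<forall>m\<ge>N0. r m = r N0"
  proof (intro allI impI)
    fix m assume "N0 \<le> m"
    then have "r m \<le> r N0" by (rule decm)
    moreover have "v \<le> r m" unfolding v_def by (rule Least_le) auto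
    ultimately show "r m = r N0" using N0 by simp
  qed
  have "stable_rank A = r N0" unfolding stable_rank_def
  proof (rule the_equality)
    show "\<exists>N. \<forall>m\<ge>N. mat_rank (A ^\<^sub>m m) = r N0" unfolding r_def[symmetric] using const by blast
  next
    fix x assume "\<exists>N. \<forall>m\<ge>N. mat_rank (A ^\<^sub>m m) = x"
    then obtain N where "\<forall>m\<ge>N. r m = x" unfolding r_def by auto
    then have "x = r (max N N0)" by simp
    also have "\<dots> = r N0" by (rule const[rule_format]) simp
    finally show "x = r N0" .
  qed
  also have "\<dots> = r (max N0 K)" by (rule const[rule_format, symmetric]) simp
  also have "\<dots> \<le> b" unfolding r_def by (rule b) simp
  finally show ?thesis .
qed

theorem lemma2p1:
  fixes X :: "'a::alg_closed_field mat" and n i :: nat and ls :: "nat list"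
    and n_as :: "(nat \<times> 'a) list"
  assumes part: "is_partition ls n"
    and X: "X \<in> carrier_mat n n"
    and nilp: "\<exists>k. X ^\<^sub>m k = 0\<^sub>m n n"
    and jnf: "jordan_nf X n_as"
    and blocks: "mset (map fst n_as) = mset ls"
    and i: "1 \<le> i" "i \<le> n - 1"
  shows "(\<forall>W. is_subspace n W \<and> sub_dim n W = i \<longrightarrow>
            (\<exists>U. is_subspace n U \<and> U \<subseteq> W \<and> (\<forall>u\<in>U. X *\<^sub>v u \<in> U) \<and>
                 sub_dim n U \<ge> sum_list (drop (n - i) ls)))
       \<and> stable_rank (submatrix X {..<i} {..<i}) \<le> i - sum_list (drop (n - i) ls)"
proof (intro conjI allI impI)
  fix W :: "'a vec set" assume W: "is_subspace n W \<and> sub_dim n W = i"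
  show "\<exists>U. is_subspace n U \<and> U \<subseteq> W \<and> (\<forall>u\<in>U. X *\<^sub>v u \<in> U) \<and> sub_dim n U \<ge> sum_list (drop (n - i) ls)"
    using part_i[OF part X nilp jnf blocks, of W] W by blast
next
  let ?s = "sum_list (drop (n - i) ls)"
  let ?Y = "submatrix X {..<i} {..<i}"
  let ?R = "restr_mat i n :: 'a mat"
  let ?W = "W0 n i :: 'a vec set"
  let ?U = "Uinv X n ?W"
  have iln: "i \<le> n" using i by simp
  have Wsub: "is_subspace n ?W" by (rule W0_subspace)
  have Wdim: "sub_dim n ?W = i" by (rule W0_dim[OF iln])
  from part_i[OF part X nilp jnf blocks Wsub]
  have Usub: "is_subspace n ?U" and UW: "?U \<subseteq> ?W" and Uinv: "\<forall>u\<in>?U. X *\<^sub>v u \<in> ?U"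
    and Udim: "sub_dim n ?U \<ge> ?s" unfolding Wdim by auto
  have Y: "?Y \<in> carrier_mat i i" by (rule submatrix_prefix(1)[OF X iln])
  have R: "?R \<in> carrier_mat i n" unfolding restr_mat_def by simp
  have Uc: "\<And>u. u \<in> ?U \<Longrightarrow> u \<in> carrier_vec n" using is_subspaceD(1)[OF Usub] by auto
  have pw: "?Y ^\<^sub>m k *\<^sub>v (?R *\<^sub>v u) = ?R *\<^sub>v (X ^\<^sub>m k *\<^sub>v u)" if "u \<in> ?U" for k u
    using that
  proof (induction k arbitrary: u)
    case 0
    then show ?case using Y R Uc[OF 0] X by simp
  next
    case (Suc k)
    have Ru: "?R *\<^sub>v u \<in> carrier_vec i" using R Uc[OF Suc.prems] by auto
    have "?Y ^\<^sub>m Suc k *\<^sub>v (?R *\<^sub>v u) = ?Y ^\<^sub>m k *\<^sub>v (?Y *\<^sub>v (?R *\<^sub>v u))"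
      by (rule pow_mat_vec_Suc(1)[OF Y Ru])
    also have "?Y *\<^sub>v (?R *\<^sub>v u) = ?R *\<^sub>v (X *\<^sub>v u)"
      using restr_commute[OF X iln] UW Suc.prems by auto
    also have "?Y ^\<^sub>m k *\<^sub>v (?R *\<^sub>v (X *\<^sub>v u)) = ?R *\<^sub>v (X ^\<^sub>m k *\<^sub>v (X *\<^sub>v u))"
      using Suc.IH Uinv Suc.prems by auto
    also have "X ^\<^sub>m k *\<^sub>v (X *\<^sub>v u) = X ^\<^sub>m Suc k *\<^sub>v u"
      by (rule pow_mat_vec_Suc(1)[OF X Uc[OF Suc.prems], symmetric])
    finally show ?case .
  qed
  obtain K where K: "X ^\<^sub>m K = 0\<^sub>m n n" using nilp by auto
  have Xz: "X ^\<^sub>m N *\<^sub>v u = 0\<^sub>v n" if "u \<in> ?U" "K \<le> N" for u N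
    using that(2)
  proof (induction N rule: dec_induct)
    case base
    have "(0\<^sub>m n n :: 'a mat) *\<^sub>v u = 0\<^sub>v n" using Uc[OF that(1)] by (intro eq_vecI) (auto simp: mult_mat_vec_def scalar_prod_def)
    then show ?case using K by simp
  next
    case (step N)
    have "X ^\<^sub>m Suc N *\<^sub>v u = X *\<^sub>v (X ^\<^sub>m N *\<^sub>v u)" by (rule pow_mat_vec_Suc(2)[OF X Uc[OF that(1)]])
    then show ?case using step.IH mult_mat_vec_zero_carrier[OF X] by simp
  qed
  have RUsub: "is_subspace i ((\<lambda>v. ?R *\<^sub>v v) ` ?U)" by (rule sub_dim_rank_nullity(1)[OF R Usub])
  have ker0: "{v \<in> ?U. ?R *\<^sub>v v = 0\<^sub>v i} = {0\<^sub>v n}"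
  proof (intro equalityI subsetI)
    fix v assume v: "v \<in> {v \<in> ?U. ?R *\<^sub>v v = 0\<^sub>v i}"
    then have vU: "v \<in> ?U" and vR: "?R *\<^sub>v v = 0\<^sub>v i" by auto
    have vc: "v \<in> carrier_vec n" using Uc[OF vU] .
    have vW: "\<And>j. i \<le> j \<Longrightarrow> j < n \<Longrightarrow> v $ j = 0" using UW vU unfolding W0_def by auto
    have "\<And>j. j < i \<Longrightarrow> v $ j = 0"
    proof -
      fix j assume "j < i"
      then show "v $ j = 0" using arg_cong[OF vR, of "\<lambda>w. w $ j"] restr_mat_vec[OF vc iln] by simp
    qed
    then have "v = 0\<^sub>v n" using vW vc by (intro eq_vecI) (auto, metis not_less)
    then show "v \<in> {0\<^sub>v n}" by simp
  next
    fix v assume "v \<in> {0\<^sub>v n :: 'a vec}"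
    then show "v \<in> {v \<in> ?U. ?R *\<^sub>v v = 0\<^sub>v i}"
      using is_subspaceD(2)[OF Usub] mult_mat_vec_zero_carrier[OF R] by auto
  qed
  have RUdim: "sub_dim i ((\<lambda>v. ?R *\<^sub>v v) ` ?U) = sub_dim n ?U"
    using sub_dim_rank_nullity(3)[OF R Usub] ker0 sub_dim_zero[of n, where 'a='a] by simp
  have "mat_rank (?Y ^\<^sub>m N) \<le> i - ?s" if N: "N \<ge> K" for N
  proof -
    have YN: "?Y ^\<^sub>m N \<in> carrier_mat i i" using Y by simp
    let ?ker = "{v \<in> carrier_vec i. ?Y ^\<^sub>m N *\<^sub>v v = 0\<^sub>v i}"
    have kersub: "is_subspace i ?ker"
      using sub_dim_rank_nullity(2)[OF YN is_subspace_full] by simp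
    have "(\<lambda>v. ?R *\<^sub>v v) ` ?U \<subseteq> ?ker"
    proof
      fix w assume "w \<in> (\<lambda>v. ?R *\<^sub>v v) ` ?U"
      then obtain u where u: "u \<in> ?U" "w = ?R *\<^sub>v u" by auto
      have "?Y ^\<^sub>m N *\<^sub>v w = ?R *\<^sub>v (X ^\<^sub>m N *\<^sub>v u)" using pw u by simp
      also have "\<dots> = 0\<^sub>v i" using Xz[OF u(1) N] mult_mat_vec_zero_carrier[OF R] by simp
      finally show "w \<in> ?ker" using u R Uc by auto
    qed
    then have "sub_dim i ((\<lambda>v. ?R *\<^sub>v v) ` ?U) \<le> sub_dim i ?ker"
      by (rule sub_dim_mono[OF RUsub kersub])
    moreover have "mat_kernel (?Y ^\<^sub>m N) = ?ker" unfolding mat_kernel_def using YN by auto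
    moreover have "kernel_dim (?Y ^\<^sub>m N) = sub_dim i (mat_kernel (?Y ^\<^sub>m N))"
      using kernel_dim_sub_dim[of "?Y ^\<^sub>m N"] YN by auto
    ultimately have "?s \<le> kernel_dim (?Y ^\<^sub>m N)" using RUdim Udim by simp
    then show ?thesis using mat_rank_kernel[OF YN] by simp
  qed
  then show "stable_rank ?Y \<le> i - ?s" by (rule stable_rank_le[OF Y]) 
qed

end
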